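(* Let $(\mathcal M,g)$ be an $n$-dimensional Lorentzian manifold ($n\ge3$) with a concircularly semi-symmetric metric connection $\overset{1}{\nabla}$ whose associated vector field $P$ satisfies $g(P,P)=-1$. Then $(\mathcal M,g,\overset{1}{\nabla})$ is an Einstein type manifold of the zeroth kind (i.e. $\overset{0}{Ric}=\frac{\overset{0}{r}}{n}g$) if and only if it is a perfect fluid space-time whose Ricci tensor is $\overset{g}{Ric}=\frac{n-1}{4}(5g+\pi\otimes\pi)$; in that case the scalar curvature is constant, $4\overset{g}{r}=(n-1)(5n-1)$.
   Context: Let $(\mathcal M,g)$ be an $n$-dimensional pseudo-Riemannian manifold with Levi-Civita connection $\overset{g}{\nabla}$, let $P$ be a vector field and $\pi=g(\cdot,P)$ its associated 1-form. The semi-symmetric metric connection generated by $\pi$ is $\overset{1}{\nabla}_XY=\overset{g}{\nabla}_XY+\pi(Y)X-g(X,Y)P$; it satisfies $\overset{1}{\nabla}g=0$ and has torsion $\overset{1}{T}(X,Y)=\pi(Y)X-\pi(X)Y$. It is called a concircularly semi-symmetric metric connection if there is a smooth function $\omega$ on $\mathcal M$ such that $(\overset{g}{\nabla}_X\pi)(Y)-\pi(X)\pi(Y)=\omega\, g(X,Y)$ for all vector fields $X,Y$. Curvature tensors: $\overset{1}{R}(X,Y)Z=\overset{1}{\nabla}_X\overset{1}{\nabla}_YZ-\overset{1}{\nabla}_Y\overset{1}{\nabla}_XZ-\overset{1}{\nabla}_{[X,Y]}Z$, and with $\mathfrak S_{XYZ}$ the cyclic sum over $X,Y,Z$: $\overset{0}{R}(X,Y)Z=\overset{1}{R}(X,Y)Z-\tfrac12(\overset{1}{\nabla}_X\overset{1}{T})(Y,Z)+\tfrac12(\overset{1}{\nabla}_Y\overset{1}{T})(X,Z)-\tfrac14\mathfrak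 S_{XYZ}\overset{1}{T}(\overset{1}{T}(X,Y),Z)-\tfrac14\overset{1}{T}(\overset{1}{T}(X,Y),Z)$. The Ricci tensors are $\overset{\theta}{Ric}(Y,Z)=\mathrm{tr}(X\mapsto \overset{\theta}{R}(X,Y)Z)$, and $\overset{g}{Ric}$ is the Ricci tensor of $\overset{g}{\nabla}$ defined the same way; $\overset{\theta}{r}$ and $\overset{g}{r}$ are their $g$-traces. A Lorentzian manifold is a perfect fluid space-time if $\overset{g}{Ric}=ag+b\,\pi\otimes\pi$ for scalar functions $a,b$. *)

theory Defs
  imports "HOL-Analysis.Analysis"
begin

text \<open>Local-coordinate model: the manifold is an open set U of real^'n (a chart),
 dimension n = CARD('n).\<close>

type_synonym ('n) vfield = "real^'n \<Rightarrow> real^'n"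

definition ddir :: "(real^'n::finite \<Rightarrow> 'b::real_normed_vector) \<Rightarrow> 'n vfield \<Rightarrow> real^'n \<Rightarrow> 'b" where
  "ddir f X x = frechet_derivative f (at x) (X x)"

fun smooth_k :: "nat \<Rightarrow> (real^'n::finite) set \<Rightarrow> (real^'n \<Rightarrow> 'b::real_normed_vector) \<Rightarrow> bool" where
  "smooth_k 0 U f = continuous_on U f"
| "smooth_k (Suc k) U f =
     (f differentiable_on U \<and> (\<forall>v. smooth_k k U (\<lambda>x. frechet_derivative f (at x) v)))"

definition smooth_on :: "(real^'n::finite) set \<Rightarrow> (real^'n \<Rightarrow> 'b::real_normed_vector) \<Rightarrow> bool" where
  "smooth_on U f \<longleftrightarrow> (\<forall>k. smooth_k k U f)"

definition gm :: "(real^'n::finite \<Rightarrow> real^'n^'n) \<Rightarrow> 'n vfield \<Rightarrow> 'n vfield \<Rightarrow> real^'n \<Rightarrow> real" where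
  "gm g X Y x = X x \<bullet> (g x *v Y x)"

definition lorentzian_metric :: "(real^'n::finite) set \<Rightarrow> (real^'n \<Rightarrow> real^'n^'n) \<Rightarrow> bool" where
  "lorentzian_metric U g \<longleftrightarrow> smooth_on U g \<and>
     (\<forall>x\<in>U. transpose (g x) = g x \<and>
        (\<exists>i0 (A::real^'n^'n). invertible A \<and>
           transpose A ** g x ** A = (\<chi> i j. if i = j then (if i = i0 then -1 else 1) else 0)))"

definition coord_vf :: "'n::finite \<Rightarrow> 'n vfield" where
  "coord_vf i = (\<lambda>x. axis i 1)"

definition christoffel :: "(real^'n::finite \<Rightarrow> real^'n^'n) \<Rightarrow> real^'n \<Rightarrow> 'n \<Rightarrow> 'n \<Rightarrow> 'n \<Rightarrow> real" where
  "christoffel g x k i j = (1/2) * (\<Sum>l\<in>UNIV. matrix_inv (g x) $ k $ l *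
      (frechet_derivative g (at x) (axis i 1) $ j $ l
       + frechet_derivative g (at x) (axis j 1) $ i $ l
       - frechet_derivative g (at x) (axis l 1) $ i $ j))"

definition lc_nabla :: "(real^'n::finite \<Rightarrow> real^'n^'n) \<Rightarrow> 'n vfield \<Rightarrow> 'n vfield \<Rightarrow> 'n vfield" where
  "lc_nabla g X Y x = ddir Y X x +
     (\<chi> k. \<Sum>i\<in>UNIV. \<Sum>j\<in>UNIV. christoffel g x k i j * X x $ i * Y x $ j)"

definition piform :: "(real^'n::finite \<Rightarrow> real^'n^'n) \<Rightarrow> 'n vfield \<Rightarrow> 'n vfield \<Rightarrow> real^'n \<Rightarrow> real" where
  "piform g P X x = gm g X P x"

definition cov_piform :: "(real^'n::finite \<Rightarrow> real^'n^'n) \<Rightarrow> 'n vfield \<Rightarrow> 'n vfield \<Rightarrow> 'n vfield \<Rightarrow> real^'n \<Rightarrow> real" where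
  "cov_piform g P X Y x = ddir (piform g P Y) X x - piform g P (lc_nabla g X Y) x"

definition nabla1 :: "(real^'n::finite \<Rightarrow> real^'n^'n) \<Rightarrow> 'n vfield \<Rightarrow> 'n vfield \<Rightarrow> 'n vfield \<Rightarrow> 'n vfield" where
  "nabla1 g P X Y x = lc_nabla g X Y x + piform g P Y x *\<^sub>R X x - gm g X Y x *\<^sub>R P x"

definition torsion1 :: "(real^'n::finite \<Rightarrow> real^'n^'n) \<Rightarrow> 'n vfield \<Rightarrow> 'n vfield \<Rightarrow> 'n vfield \<Rightarrow> 'n vfield" where
  "torsion1 g P X Y x = piform g P Y x *\<^sub>R X x - piform g P X x *\<^sub>R Y x"

definition lie_bracket :: "'n::finite vfield \<Rightarrow> 'n vfield \<Rightarrow> 'n vfield" where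
  "lie_bracket X Y x = ddir Y X x - ddir X Y x"

definition curv :: "('n::finite vfield \<Rightarrow> 'n vfield \<Rightarrow> 'n vfield) \<Rightarrow> 'n vfield \<Rightarrow> 'n vfield \<Rightarrow> 'n vfield \<Rightarrow> 'n vfield" where
  "curv nab X Y Z x = nab X (nab Y Z) x - nab Y (nab X Z) x - nab (lie_bracket X Y) Z x"

definition cov_torsion :: "('n::finite vfield \<Rightarrow> 'n vfield \<Rightarrow> 'n vfield) \<Rightarrow> ('n vfield \<Rightarrow> 'n vfield \<Rightarrow> 'n vfield)
    \<Rightarrow> 'n vfield \<Rightarrow> 'n vfield \<Rightarrow> 'n vfield \<Rightarrow> 'n vfield" where
  "cov_torsion nab T X Y Z x = nab X (T Y Z) x - T (nab X Y) Z x - T Y (nab X Z) x"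

definition curv0 :: "(real^'n::finite \<Rightarrow> real^'n^'n) \<Rightarrow> 'n vfield \<Rightarrow> 'n vfield \<Rightarrow> 'n vfield \<Rightarrow> 'n vfield \<Rightarrow> 'n vfield" where
  "curv0 g P X Y Z x =
     (let T = torsion1 g P; nab = nabla1 g P in
      curv nab X Y Z x
      - (1/2) *\<^sub>R cov_torsion nab T X Y Z x
      + (1/2) *\<^sub>R cov_torsion nab T Y X Z x
      - (1/4) *\<^sub>R (T (T X Y) Z x + T (T Y Z) X x + T (T Z X) Y x)
      - (1/4) *\<^sub>R T (T X Y) Z x)"

definition ricci :: "('n::finite vfield \<Rightarrow> 'n vfield \<Rightarrow> 'n vfield \<Rightarrow> 'n vfield) \<Rightarrow> 'n vfield \<Rightarrow> 'n vfield \<Rightarrow> real^'n \<Rightarrow> real" where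
  "ricci R Y Z x = (\<Sum>i\<in>UNIV. R (coord_vf i) Y Z x $ i)"

definition scal :: "(real^'n::finite \<Rightarrow> real^'n^'n) \<Rightarrow> ('n vfield \<Rightarrow> 'n vfield \<Rightarrow> real^'n \<Rightarrow> real) \<Rightarrow> real^'n \<Rightarrow> real" where
  "scal g Ric x = (\<Sum>i\<in>UNIV. \<Sum>j\<in>UNIV. matrix_inv (g x) $ i $ j * Ric (coord_vf i) (coord_vf j) x)"

definition ricci_g :: "(real^'n::finite \<Rightarrow> real^'n^'n) \<Rightarrow> 'n vfield \<Rightarrow> 'n vfield \<Rightarrow> real^'n \<Rightarrow> real" where
  "ricci_g g = ricci (curv (lc_nabla g))"

definition ricci0 :: "(real^'n::finite \<Rightarrow> real^'n^'n) \<Rightarrow> 'n vfield \<Rightarrow> 'n vfield \<Rightarrow> 'n vfield \<Rightarrow> real^'n \<Rightarrow> real" where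
  "ricci0 g P = ricci (curv0 g P)"

definition concircular :: "(real^'n::finite) set \<Rightarrow> (real^'n \<Rightarrow> real^'n^'n) \<Rightarrow> 'n vfield \<Rightarrow> (real^'n \<Rightarrow> real) \<Rightarrow> bool" where
  "concircular U g P \<omega> \<longleftrightarrow> smooth_on U \<omega> \<and>
     (\<forall>X Y. smooth_on U X \<longrightarrow> smooth_on U Y \<longrightarrow>
        (\<forall>x\<in>U. cov_piform g P X Y x - piform g P X x * piform g P Y x = \<omega> x * gm g X Y x))"

definition einstein_zeroth :: "(real^'n::finite) set \<Rightarrow> (real^'n \<Rightarrow> real^'n^'n) \<Rightarrow> 'n vfield \<Rightarrow> bool" where
  "einstein_zeroth U g P \<longleftrightarrow>
     (\<forall>Y Z. smooth_on U Y \<longrightarrow> smooth_on U Z \<longrightarrow>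
        (\<forall>x\<in>U. ricci0 g P Y Z x = scal g (ricci0 g P) x / real CARD('n) * gm g Y Z x))"

definition perfect_fluid :: "(real^'n::finite) set \<Rightarrow> (real^'n \<Rightarrow> real^'n^'n) \<Rightarrow> 'n vfield \<Rightarrow> bool" where
  "perfect_fluid U g P \<longleftrightarrow>
     (\<exists>a b :: real^'n \<Rightarrow> real. \<forall>Y Z. smooth_on U Y \<longrightarrow> smooth_on U Z \<longrightarrow>
        (\<forall>x\<in>U. ricci_g g Y Z x = a x * gm g Y Z x + b x * piform g P Y x * piform g P Z x))"

end

theory Submission
  imports Defs
begin


lemma fd_works: "f differentiable (at x) \<Longrightarrow> (f has_derivative frechet_derivative f (at x)) (at x)"
  using frechet_derivative_works by blast

lemma fd_eq: "(f has_derivative f') (at x) \<Longrightarrow> frechet_derivative f (at x) v = f' v"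
  using frechet_derivative_at by metis

lemma fd_add:
  assumes "f differentiable (at x)" "h differentiable (at x)"
  shows "frechet_derivative (\<lambda>y. f y + h y) (at x) v = frechet_derivative f (at x) v + frechet_derivative h (at x) v"
  by (rule fd_eq) (intro has_derivative_add fd_works assms)

lemma fd_diff:
  assumes "f differentiable (at x)" "h differentiable (at x)"
  shows "frechet_derivative (\<lambda>y. f y - h y) (at x) v = frechet_derivative f (at x) v - frechet_derivative h (at x) v"
  by (rule fd_eq) (intro has_derivative_diff fd_works assms)

lemma fd_scaleR:
  assumes "f differentiable (at x)" "h differentiable (at x)"
  shows "frechet_derivative (\<lambda>y. f y *\<^sub>R h y) (at x) v = f x *\<^sub>R frechet_derivative h (at x) v + frechet_derivative f (at x) v *\<^sub>R h x"
  by (rule fd_eq) (intro has_derivative_scaleR fd_works assms)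

lemma fd_mult:
  fixes f h :: "'a::real_normed_vector \<Rightarrow> real"
  assumes "f differentiable (at x)" "h differentiable (at x)"
  shows "frechet_derivative (\<lambda>y. f y * h y) (at x) v = f x * frechet_derivative h (at x) v + frechet_derivative f (at x) v * h x"
  by (rule fd_eq) (intro has_derivative_mult fd_works assms)

lemma fd_sum:
  assumes "\<And>i. i \<in> I \<Longrightarrow> f i differentiable (at x)"
  shows "frechet_derivative (\<lambda>y. \<Sum>i\<in>I. f i y) (at x) v = (\<Sum>i\<in>I. frechet_derivative (f i) (at x) v)"
  by (rule fd_eq) (intro has_derivative_sum fd_works assms)

lemma fd_nth:
  assumes "f differentiable (at x)"
  shows "frechet_derivative (\<lambda>y. f y $ i) (at x) v = frechet_derivative f (at x) v $ i"
  by (rule fd_eq) (intro bounded_linear.has_derivative[OF bounded_linear_vec_nth] fd_works assms)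

lemma diff_nth: "f differentiable (at x) \<Longrightarrow> (\<lambda>y. f y $ i) differentiable (at x)"
  unfolding differentiable_def
  using bounded_linear.has_derivative[OF bounded_linear_vec_nth] by blast

lemma fd_linear: "f differentiable (at x) \<Longrightarrow> linear (frechet_derivative f (at x))"
  by (rule linear_frechet_derivative)

lemma fd_transform:
  assumes "open U" "x \<in> U" "\<And>y. y \<in> U \<Longrightarrow> f y = h y" "f differentiable (at x)"
  shows "frechet_derivative f (at x) = frechet_derivative h (at x)"
  using frechet_derivative_transform_within_open assms by metis

lemma diff_transform:
  assumes "open U" "x \<in> U" "\<And>y. y \<in> U \<Longrightarrow> f y = h y" "f differentiable (at x)"
  shows "h differentiable (at x)"
  using assms unfolding differentiable_def
  using has_derivative_transform_within_open by metis

lemma vec_as_sum: "(\<chi> k. f k) = (\<Sum>k\<in>UNIV. f k *\<^sub>R axis k (1::real))"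
  by (simp add: vec_eq_iff sum_component axis_def if_distrib cong: if_cong)

lemma diff_vec:
  assumes "\<And>k. (\<lambda>y. f k y) differentiable (at x)"
  shows "(\<lambda>y. (\<chi> k. f k y) :: real^'n) differentiable (at x)"
proof -
  have "(\<lambda>y. (\<Sum>k\<in>UNIV. f k y *\<^sub>R axis k (1::real))) differentiable (at x)"
    using assms by (intro differentiable_sum differentiable_scaleR) auto
  then show ?thesis by (simp add: vec_as_sum[symmetric])
qed

lemma bl_axis: "bounded_linear (axis k :: 'a::real_normed_vector \<Rightarrow> 'a^'n)"
proof (rule bounded_linear_intro[where K=1])
  show "axis k (x + y) = axis k x + axis k y" for x y :: 'a
    by (simp add: axis_def vec_eq_iff)
  show "axis k (r *\<^sub>R x) = r *\<^sub>R axis k x" for r and x :: 'a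
    by (simp add: axis_def vec_eq_iff)
  show "norm (axis k x :: 'a^'n) \<le> norm x * 1" for x :: 'a
  proof -
    have "norm (axis k x :: 'a^'n) \<le> (\<Sum>i\<in>UNIV. norm ((axis k x :: 'a^'n) $ i))"
      unfolding norm_vec_def by (rule L2_set_le_sum) auto
    also have "\<dots> = norm x"
      by (simp add: axis_def if_distrib cong: if_cong)
    finally show ?thesis by simp
  qed
qed

lemma vec_as_sum_gen: "(\<chi> k. f k) = (\<Sum>k\<in>UNIV. axis k (f k))"
  by (simp add: vec_eq_iff sum_component axis_def if_distrib cong: if_cong)

lemma diff_vec_gen:
  fixes f :: "'n::finite \<Rightarrow> 'a::real_normed_vector \<Rightarrow> 'b::real_normed_vector"
  assumes "\<And>k. (\<lambda>y. f k y) differentiable (at x)"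
  shows "(\<lambda>y. (\<chi> k. f k y)) differentiable (at x)"
proof -
  have "(\<lambda>y. (\<Sum>k\<in>UNIV. axis k (f k y))) differentiable (at x)"
    using assms by (intro differentiable_sum) (auto intro: differentiable_compose[where f="axis _"] bounded_linear_imp_differentiable bl_axis)
  then show ?thesis by (simp add: vec_as_sum_gen[symmetric])
qed

lemma diff_prod:
  fixes f :: "'i \<Rightarrow> 'a::real_normed_vector \<Rightarrow> real"
  assumes "\<And>i. i \<in> I \<Longrightarrow> f i differentiable (at x)"
  shows "(\<lambda>y. \<Prod>i\<in>I. f i y) differentiable (at x)"
proof -
  have "\<forall>i\<in>I. \<exists>D. (f i has_derivative D) (at x)"
    using assms unfolding differentiable_def by blast
  then obtain D where "\<forall>i\<in>I. (f i has_derivative D i) (at x)"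
    by (rule bchoice[elim_format]) blast
  then have "((\<lambda>y. \<Prod>i\<in>I. f i y) has_derivative (\<lambda>h. \<Sum>i\<in>I. D i h * (\<Prod>j\<in>I-{i}. f j x))) (at x)"
    by (intro has_derivative_prod) auto
  then show ?thesis unfolding differentiable_def by blast
qed

lemma diff_det:
  fixes M :: "'a::real_normed_vector \<Rightarrow> real^'n^'n"
  assumes "M differentiable (at x)"
  shows "(\<lambda>y. det (M y)) differentiable (at x)"
  unfolding det_def
  apply (rule differentiable_sum)
  apply (simp add: finite_permutations)
  apply (rule ballI)
  apply (rule differentiable_mult[OF differentiable_const])
  apply (rule diff_prod)
  apply (rule diff_nth)+
  apply (rule assms)
  done

lemma minv:
  assumes "invertible (A::real^'n^'n)"
  shows "A ** matrix_inv A = mat 1" "matrix_inv A ** A = mat 1"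
proof -
  have "\<exists>A'. A ** A' = mat 1 \<and> A' ** A = mat 1" using assms unfolding invertible_def by blast
  then have "A ** matrix_inv A = mat 1 \<and> matrix_inv A ** A = mat 1"
    unfolding matrix_inv_def by (rule someI_ex)
  then show "A ** matrix_inv A = mat 1" "matrix_inv A ** A = mat 1" by auto
qed

lemma mv_axis: "((M::real^'n^'m) *v axis l 1) $ k = M $ k $ l"
  by (simp add: matrix_vector_mult_def axis_def if_distrib cong: if_cong)

lemma minv_entry:
  assumes "invertible (A::real^'n^'n)"
  shows "matrix_inv A $ k $ l = det (\<chi> i j. if j = k then axis l 1 $ i else A$i$j) / det A"
proof -
  have d: "det A \<noteq> 0" using assms invertible_det_nz by blast
  have "A *v (matrix_inv A *v axis l 1) = axis l 1"
    by (simp add: matrix_vector_mul_assoc minv[OF assms])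
  then have "matrix_inv A *v axis l 1 = (\<chi> k. det(\<chi> i j. if j=k then axis l 1 $i else A$i$j) / det A)"
    using cramer[OF d] by blast
  then have "(matrix_inv A *v axis l 1) $ k = det(\<chi> i j. if j=k then axis l 1 $i else A$i$j) / det A"
    by simp
  then show ?thesis by (simp add: mv_axis)
qed

lemma diff_minv:
  fixes M :: "'a::real_normed_vector \<Rightarrow> real^'n^'n"
  assumes "open U" "x \<in> U" "\<And>y. y \<in> U \<Longrightarrow> invertible (M y)" "M differentiable (at x)"
  shows "(\<lambda>y. matrix_inv (M y) $ k $ l) differentiable (at x)"
proof (rule diff_transform[OF assms(1,2)])
  show "(\<lambda>y. det (\<chi> i j. if j = k then axis l 1 $ i else M y $i$j) / det (M y)) differentiable (at x)"
  proof (rule differentiable_divide)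
    have "(\<lambda>y. (\<chi> i j. if j = k then axis l 1 $ i else M y $i$j) :: real^'n^'n) differentiable (at x)"
      proof (intro diff_vec_gen)
      fix i j
      show "(\<lambda>y. if j = k then axis l 1 $ i else M y $ i $ j) differentiable (at x)"
      proof (cases "j = k")
        case True then show ?thesis by simp
      next
        case False
        have "(\<lambda>y. M y $ i $ j) differentiable (at x)" by (intro diff_nth assms)
        then show ?thesis using False by simp
      qed
    qed
    then show "(\<lambda>y. det (\<chi> i j. if j = k then axis l 1 $ i else M y $i$j)) differentiable (at x)"
      by (rule diff_det)
    show "(\<lambda>y. det (M y)) differentiable (at x)" by (rule diff_det[OF assms(4)])
    show "det (M x) \<noteq> 0" using assms(2,3) invertible_det_nz by blast
  qed
  show "\<And>y. y \<in> U \<Longrightarrow> det (\<chi> i j. if j = k then axis l 1 $ i else M y $i$j) / det (M y) = matrix_inv (M y) $ k $ l"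
    using minv_entry[OF assms(3)] by simp
qed


lemma sym_dot:
  fixes G :: "real^'n^'n"
  assumes "transpose G = G"
  shows "u \<bullet> (G *v w) = (G *v u) \<bullet> w"
proof -
  have "G *v u = u v* G" by (metis assms transpose_matrix_vector)
  then show ?thesis by (simp add: dot_lmul_matrix)
qed

lemma sum_swap3: "(\<Sum>l\<in>A. \<Sum>i\<in>B. \<Sum>j\<in>C. f i j l) = (\<Sum>i\<in>B. \<Sum>j\<in>C. \<Sum>l\<in>A. f i j l)"
proof -
  have "(\<Sum>l\<in>A. \<Sum>i\<in>B. \<Sum>j\<in>C. f i j l) = (\<Sum>i\<in>B. \<Sum>l\<in>A. \<Sum>j\<in>C. f i j l)"
    by (rule sum.swap)
  also have "\<dots> = (\<Sum>i\<in>B. \<Sum>j\<in>C. \<Sum>l\<in>A. f i j l)"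
    by (rule sum.cong[OF refl], rule sum.swap)
  finally show ?thesis .
qed

lemma christ_alg:
  fixes G Gi :: "real^'n^'n" and a :: "'n \<Rightarrow> real^'n^'n" and v Y Z :: "real^'n"
  assumes GGi: "G ** Gi = mat 1" and Gs: "transpose G = G" and as: "\<And>i. transpose (a i) = a i"
  shows "(\<chi> k. \<Sum>i\<in>UNIV. \<Sum>j\<in>UNIV. (1/2 * (\<Sum>l\<in>UNIV. Gi$k$l * (a i $j$l + a j$i$l - a l$i$j))) * v$i * Y$j) \<bullet> (G *v Z)
       + Y \<bullet> (G *v (\<chi> k. \<Sum>i\<in>UNIV. \<Sum>j\<in>UNIV. (1/2 * (\<Sum>l\<in>UNIV. Gi$k$l * (a i $j$l + a j$i$l - a l$i$j))) * v$i * Z$j))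
     = (\<Sum>i\<in>UNIV. v$i * (Y \<bullet> (a i *v Z)))"
proof -
  define c where "c i j l = a i $j$l + a j$i$l - a l$i$j" for i j l
  define C where "C W = (\<chi> l. \<Sum>i\<in>UNIV. \<Sum>j\<in>UNIV. 1/2 * (v$i * W$j * c i j l))" for W :: "real^'n"
  have A: "(\<chi> k. \<Sum>i\<in>UNIV. \<Sum>j\<in>UNIV. (1/2 * (\<Sum>l\<in>UNIV. Gi$k$l * c i j l)) * v$i * W$j) = Gi *v C W" for W
  proof -
    have "(\<Sum>i\<in>UNIV. \<Sum>j\<in>UNIV. (1/2 * (\<Sum>l\<in>UNIV. Gi$k$l * c i j l)) * v$i * W$j)
        = (\<Sum>l\<in>UNIV. Gi$k$l * (\<Sum>i\<in>UNIV. \<Sum>j\<in>UNIV. 1/2 * (v$i * W$j * c i j l)))" for k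
    proof -
      have "(\<Sum>l\<in>UNIV. Gi$k$l * (\<Sum>i\<in>UNIV. \<Sum>j\<in>UNIV. 1/2 * (v$i * W$j * c i j l)))
          = (\<Sum>l\<in>UNIV. \<Sum>i\<in>UNIV. \<Sum>j\<in>UNIV. Gi$k$l * (1/2 * (v$i * W$j * c i j l)))"
        by (simp add: sum_distrib_left)
      also have "\<dots> = (\<Sum>i\<in>UNIV. \<Sum>j\<in>UNIV. \<Sum>l\<in>UNIV. Gi$k$l * (1/2 * (v$i * W$j * c i j l)))"
        by (rule sum_swap3)
      also have "\<dots> = (\<Sum>i\<in>UNIV. \<Sum>j\<in>UNIV. (1/2 * (\<Sum>l\<in>UNIV. Gi$k$l * c i j l)) * v$i * W$j)"
        by (simp add: sum_distrib_left sum_distrib_right mult_ac)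
      finally show ?thesis by simp
    qed
    then show ?thesis by (simp add: vec_eq_iff matrix_vector_mult_def C_def)
  qed
  have B: "(Gi *v w) \<bullet> (G *v Z) = w \<bullet> Z" for w
  proof -
    have "(Gi *v w) \<bullet> (G *v Z) = (G *v (Gi *v w)) \<bullet> Z" by (rule sym_dot[OF Gs])
    also have "\<dots> = w \<bullet> Z" by (simp add: matrix_vector_mul_assoc GGi)
    finally show ?thesis .
  qed
  have B2: "Y \<bullet> (G *v (Gi *v w)) = Y \<bullet> w" for w
    by (simp add: matrix_vector_mul_assoc GGi)
  have asym: "a i $ j $ l = a i $ l $ j" for i j l
    using as[of i] by (metis transpose_def vec_lambda_beta)
  have D: "C Y \<bullet> Z + Y \<bullet> C Z = (\<Sum>i\<in>UNIV. v$i * (Y \<bullet> (a i *v Z)))"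
  proof -
    have 1: "C Y \<bullet> Z = (\<Sum>i\<in>UNIV. \<Sum>j\<in>UNIV. \<Sum>l\<in>UNIV. 1/2 * (v$i * Y$j * Z$l * c i j l))"
    proof -
      have "C Y \<bullet> Z = (\<Sum>l\<in>UNIV. \<Sum>i\<in>UNIV. \<Sum>j\<in>UNIV. 1/2 * (v$i * Y$j * Z$l * c i j l))"
        by (simp add: C_def inner_vec_def sum_distrib_left sum_distrib_right mult_ac)
      also have "\<dots> = (\<Sum>i\<in>UNIV. \<Sum>j\<in>UNIV. \<Sum>l\<in>UNIV. 1/2 * (v$i * Y$j * Z$l * c i j l))"
        by (rule sum_swap3)
      finally show ?thesis .
    qed
    have 2: "Y \<bullet> C Z = (\<Sum>i\<in>UNIV. \<Sum>j\<in>UNIV. \<Sum>l\<in>UNIV. 1/2 * (v$i * Y$j * Z$l * c i l j))"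
    proof -
      have "Y \<bullet> C Z = (\<Sum>j\<in>UNIV. \<Sum>i\<in>UNIV. \<Sum>l\<in>UNIV. 1/2 * (v$i * Y$j * Z$l * c i l j))"
        by (simp add: C_def inner_vec_def sum_distrib_left sum_distrib_right mult_ac)
      also have "\<dots> = (\<Sum>i\<in>UNIV. \<Sum>j\<in>UNIV. \<Sum>l\<in>UNIV. 1/2 * (v$i * Y$j * Z$l * c i l j))"
        by (rule sum.swap)
      finally show ?thesis .
    qed
    have 3: "(\<Sum>i\<in>UNIV. v$i * (Y \<bullet> (a i *v Z))) = (\<Sum>i\<in>UNIV. \<Sum>j\<in>UNIV. \<Sum>l\<in>UNIV. v$i * Y$j * Z$l * a i $j$l)"
      by (simp add: inner_vec_def matrix_vector_mult_def sum_distrib_left mult_ac)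
    have 4: "1/2 * (v$i * Y$j * Z$l * c i j l) + 1/2 * (v$i * Y$j * Z$l * c i l j) = v$i * Y$j * Z$l * a i $j$l" for i j l
      unfolding c_def using asym[of i j l] asym[of j i l] asym[of l i j] by (simp add: algebra_simps)
    show ?thesis unfolding 1 2 3 by (simp only: sum.distrib[symmetric] 4)
  qed
  show ?thesis
    unfolding c_def[symmetric] A B B2 D ..
qed


lemma smooth_k_const: "smooth_k k U (\<lambda>_. c)"
  by (induction k arbitrary: c) (auto simp: continuous_on_const)

lemma smooth_on_const: "smooth_on U (\<lambda>_. c)"
  by (simp add: smooth_on_def smooth_k_const)

lemma diagsq:
  fixes i0 :: "'n::finite"
  shows "((\<chi> i j. if i = j then (if i = i0 then -1 else 1) else 0) ** (\<chi> i j. if i = j then (if i = i0 then -1 else 1) else 0) :: real^'n^'n) = mat 1"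
proof -
  have "(\<Sum>k\<in>UNIV. (if i = k then (if i = i0 then -1 else 1) else 0) * (if k = j then (if k = i0 then -1 else 1) else 0)) = (if i = j then 1 else (0::real))" for i j :: 'n
  proof -
    have "(\<Sum>k\<in>UNIV. (if i = k then (if i = i0 then -1 else 1) else 0) * (if k = j then (if k = i0 then -1 else 1) else 0))
       = (\<Sum>k\<in>UNIV. if k = i then (if i = i0 then -1 else 1) * (if k = j then (if k = i0 then -1 else 1) else 0) else (0::real))"
      by (rule sum.cong) auto
    also have "\<dots> = (if i = j then 1 else 0)" by simp
    finally show ?thesis .
  qed
  then show ?thesis by (simp add: matrix_matrix_mult_def mat_def vec_eq_iff)
qed
lemma smooth_diff: "open U \<Longrightarrow> smooth_on U f \<Longrightarrow> x \<in> U \<Longrightarrow> f differentiable (at x)"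
proof -
  assume "open U" "smooth_on U f" "x \<in> U"
  then have "smooth_k (Suc 0) U f" unfolding smooth_on_def by blast
  then have "f differentiable_on U" by simp
  then show ?thesis using \<open>open U\<close> \<open>x \<in> U\<close> differentiable_on_eq_differentiable_at by blast
qed

lemma smooth_D: "smooth_on U f \<Longrightarrow> smooth_on U (\<lambda>y. frechet_derivative f (at y) v)"
  unfolding smooth_on_def
proof
  fix k assume "\<forall>k. smooth_k k U f"
  then have "smooth_k (Suc k) U f" by blast
  then show "smooth_k k U (\<lambda>y. frechet_derivative f (at y) v)" by simp
qed

locale geo =
  fixes U :: "(real^'n::finite) set" and g :: "real^'n \<Rightarrow> real^'n^'n" and P :: "'n vfield" and \<omega> :: "real^'n \<Rightarrow> real"
  assumes opn: "open U" and lor: "lorentzian_metric U g" and Psm: "smooth_on U P"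
    and conc: "concircular U g P \<omega>" and PP: "\<forall>x\<in>U. gm g P P x = -1"
begin

lemma g_smooth: "smooth_on U g"
  using lor unfolding lorentzian_metric_def by blast

lemma g_sym: "x \<in> U \<Longrightarrow> transpose (g x) = g x"
  using lor unfolding lorentzian_metric_def by blast

lemma g_ent: "x \<in> U \<Longrightarrow> g x $ i $ j = g x $ j $ i"
  using g_sym[of x] by (metis transpose_def vec_lambda_beta)

lemma g_inv: "x \<in> U \<Longrightarrow> invertible (g x)"
proof -
  assume x: "x \<in> U"
  then obtain i0 and A :: "real^'n^'n" where A: "invertible A"
    and eq: "transpose A ** g x ** A = (\<chi> i j. if i = j then (if i = i0 then -1 else 1) else 0)"
    using lor unfolding lorentzian_metric_def by blast
  have "det (transpose A ** g x ** A) * det (transpose A ** g x ** A) = 1"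
    unfolding eq det_mul[symmetric] diagsq by simp
  then have "det (g x) \<noteq> 0" by (auto simp: det_mul)
  then show ?thesis by (simp add: invertible_det_nz)
qed

lemma g_diff: "x \<in> U \<Longrightarrow> g differentiable (at x)"
  using smooth_diff[OF opn g_smooth] .

lemma Dg_diff: "x \<in> U \<Longrightarrow> (\<lambda>y. frechet_derivative g (at y) v) differentiable (at x)"
  using smooth_diff[OF opn smooth_D[OF g_smooth]] .

lemma Dg_ent: "x \<in> U \<Longrightarrow> frechet_derivative g (at x) v $ i $ j = frechet_derivative g (at x) v $ j $ i"
proof -
  assume x: "x \<in> U"
  have d1: "(\<lambda>y. g y $ i) differentiable (at x)" by (intro diff_nth g_diff x)
  have d2: "(\<lambda>y. g y $ j) differentiable (at x)" by (intro diff_nth g_diff x)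
  have "frechet_derivative g (at x) v $ i $ j = frechet_derivative (\<lambda>y. g y $ i $ j) (at x) v"
    using fd_nth[OF d1] fd_nth[OF g_diff[OF x]] by simp
  also have "\<dots> = frechet_derivative (\<lambda>y. g y $ j $ i) (at x) v"
    using fd_transform[OF opn x, of "\<lambda>y. g y $ i $ j" "\<lambda>y. g y $ j $ i"] g_ent diff_nth[OF d1] by auto
  also have "\<dots> = frechet_derivative g (at x) v $ j $ i"
    using fd_nth[OF d2] fd_nth[OF g_diff[OF x]] by simp
  finally show ?thesis .
qed

lemma Dg_sym: "x \<in> U \<Longrightarrow> transpose (frechet_derivative g (at x) v) = frechet_derivative g (at x) v"
  using Dg_ent by (simp add: transpose_def vec_eq_iff)

end


lemma gm_sum: "u \<bullet> (M *v w) = (\<Sum>i\<in>UNIV. \<Sum>j\<in>UNIV. u$i * (M$i$j * w$j))"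
  by (simp add: inner_vec_def matrix_vector_mult_def sum_distrib_left)

lemma vec_basis: "(v::real^'n) = (\<Sum>i\<in>UNIV. v$i *\<^sub>R axis i 1)"
  using vec_as_sum[of "\<lambda>k. v$k"] by simp

context geo
begin

definition C1 :: "(real^'n \<Rightarrow> 'b::real_normed_vector) \<Rightarrow> bool" where
  "C1 f \<longleftrightarrow> (\<forall>y\<in>U. f differentiable (at y))"

definition C2 :: "(real^'n \<Rightarrow> 'b::real_normed_vector) \<Rightarrow> bool" where
  "C2 f \<longleftrightarrow> C1 f \<and> (\<forall>v. C1 (\<lambda>y. frechet_derivative f (at y) v))"

lemma smooth_C1: "smooth_on U f \<Longrightarrow> C1 f"
  unfolding C1_def using smooth_diff[OF opn] by blast

lemma smooth_C2: "smooth_on U f \<Longrightarrow> C2 f"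
  unfolding C2_def using smooth_C1 smooth_D by blast

lemma C1D: "C1 f \<Longrightarrow> y \<in> U \<Longrightarrow> f differentiable (at y)"
  unfolding C1_def by blast

lemma C2_C1: "C2 f \<Longrightarrow> C1 f" unfolding C2_def by blast

lemma C1_const: "C1 (\<lambda>_. c)" unfolding C1_def by simp

lemma C1_add: "C1 f \<Longrightarrow> C1 h \<Longrightarrow> C1 (\<lambda>y. f y + h y)"
  unfolding C1_def by simp
lemma C1_diff: "C1 f \<Longrightarrow> C1 h \<Longrightarrow> C1 (\<lambda>y. f y - h y)"
  unfolding C1_def by simp
lemma C1_scaleR: "C1 f \<Longrightarrow> C1 h \<Longrightarrow> C1 (\<lambda>y. f y *\<^sub>R h y)"
  unfolding C1_def by simp
lemma C1_mult: "C1 (f::_\<Rightarrow>real) \<Longrightarrow> C1 h \<Longrightarrow> C1 (\<lambda>y. f y * h y)"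
  unfolding C1_def by simp
lemma C1_inner: "C1 f \<Longrightarrow> C1 h \<Longrightarrow> C1 (\<lambda>y. f y \<bullet> h y)"
  unfolding C1_def by simp
lemma C1_nth: "C1 f \<Longrightarrow> C1 (\<lambda>y. f y $ i)"
  unfolding C1_def using diff_nth by blast
lemma C1_sum: "finite I \<Longrightarrow> (\<And>i. i \<in> I \<Longrightarrow> C1 (f i)) \<Longrightarrow> C1 (\<lambda>y. \<Sum>i\<in>I. f i y)"
  unfolding C1_def by (auto intro!: differentiable_sum)
lemma C1_vec: "(\<And>k. C1 (f k)) \<Longrightarrow> C1 (\<lambda>y. \<chi> k. f k y)"
  unfolding C1_def using diff_vec_gen by metis

lemma C1_g: "C1 g" using smooth_C1[OF g_smooth] .
lemma C1_P: "C1 P" using smooth_C1[OF Psm] .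
lemma C1_Dg: "C1 (\<lambda>y. frechet_derivative g (at y) v)" using smooth_C1[OF smooth_D[OF g_smooth]] .

lemma C1_mv:
  fixes M :: "real^'n \<Rightarrow> real^'k::finite^'m::finite" and V :: "real^'n \<Rightarrow> real^'k"
  shows "C1 M \<Longrightarrow> C1 V \<Longrightarrow> C1 (\<lambda>y. M y *v V y)"
proof -
  assume M: "C1 M" and V: "C1 V"
  have "C1 (\<lambda>y. \<chi> i. \<Sum>j\<in>UNIV. M y $ i $ j * V y $ j)"
    by (intro C1_vec C1_sum C1_mult C1_nth M V) simp_all
  then show ?thesis by (simp add: matrix_vector_mult_def)
qed

lemma C1_gm: "C1 Y \<Longrightarrow> C1 Z \<Longrightarrow> C1 (gm g Y Z)"
proof -
  assume "C1 Y" "C1 Z"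
  then have "C1 (\<lambda>y. Y y \<bullet> (g y *v Z y))" by (intro C1_inner C1_mv C1_g)
  then show ?thesis by (simp add: gm_def[abs_def])
qed

lemma C1_piform: "C1 Z \<Longrightarrow> C1 (piform g P Z)"
  unfolding piform_def[abs_def] using C1_gm[OF _ C1_P] by simp

lemma C1_minv: "C1 (\<lambda>y. matrix_inv (g y) $ k $ l)"
  unfolding C1_def
proof
  fix y assume y: "y \<in> U"
  show "(\<lambda>y. matrix_inv (g y) $ k $ l) differentiable (at y)"
    by (rule diff_minv[OF opn y g_inv g_diff[OF y]])
qed

lemma C1_christ: "C1 (\<lambda>y. christoffel g y k i j)"
proof -
  have "C1 (\<lambda>y. 1/2 * (\<Sum>l\<in>UNIV. matrix_inv (g y) $ k $ l *
      (frechet_derivative g (at y) (axis i 1) $ j $ l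
       + frechet_derivative g (at y) (axis j 1) $ i $ l
       - frechet_derivative g (at y) (axis l 1) $ i $ j)))"
    by (intro C1_mult C1_const C1_sum C1_minv C1_add C1_diff C1_nth C1_Dg) simp_all
  then show ?thesis by (simp add: christoffel_def[abs_def])
qed

lemma C1_Dapp: "C1 Y \<Longrightarrow> C2 Z \<Longrightarrow> C1 (\<lambda>y. frechet_derivative Z (at y) (Y y))"
  unfolding C1_def
proof
  fix x assume Y: "\<forall>y\<in>U. Y differentiable (at y)" and Z: "C2 Z" and x: "x \<in> U"
  have eq: "frechet_derivative Z (at y) (Y y) = (\<Sum>i\<in>UNIV. Y y $ i *\<^sub>R frechet_derivative Z (at y) (axis i 1))"
    if "y \<in> U" for y
  proof -
    have lin: "linear (frechet_derivative Z (at y))"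
      using fd_linear C1D[OF C2_C1[OF Z] that] by blast
    have "frechet_derivative Z (at y) (Y y) = frechet_derivative Z (at y) (\<Sum>i\<in>UNIV. Y y $ i *\<^sub>R axis i 1)"
      using vec_basis[of "Y y"] by simp
    also have "\<dots> = (\<Sum>i\<in>UNIV. Y y $ i *\<^sub>R frechet_derivative Z (at y) (axis i 1))"
      by (simp add: real_vector.linear_sum[OF lin] linear_cmul[OF lin])
    finally show ?thesis .
  qed
  have "C1 (\<lambda>y. \<Sum>i\<in>UNIV. Y y $ i *\<^sub>R frechet_derivative Z (at y) (axis i 1))"
    using Z Y unfolding C2_def by (intro C1_sum C1_scaleR C1_nth) (auto simp: C1_def)
  then have d: "(\<lambda>y. \<Sum>i\<in>UNIV. Y y $ i *\<^sub>R frechet_derivative Z (at y) (axis i 1)) differentiable (at x)"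
    using x C1D by blast
  show "(\<lambda>y. frechet_derivative Z (at y) (Y y)) differentiable (at x)"
    by (rule diff_transform[OF opn x _ d]) (simp add: eq)
qed

lemma C1_lc: "C1 Y \<Longrightarrow> C2 Z \<Longrightarrow> C1 (lc_nabla g Y Z)"
proof -
  assume Y: "C1 Y" and Z: "C2 Z"
  have "C1 (\<lambda>y. frechet_derivative Z (at y) (Y y) +
     (\<chi> k. \<Sum>i\<in>UNIV. \<Sum>j\<in>UNIV. christoffel g y k i j * Y y $ i * Z y $ j))"
    by (intro C1_add C1_Dapp Y Z C1_vec C1_sum C1_mult C1_christ C1_nth C2_C1[OF Z]) simp_all
  then show ?thesis by (simp add: lc_nabla_def[abs_def] ddir_def)
qed

lemma C1_nabla1: "C1 Y \<Longrightarrow> C2 Z \<Longrightarrow> C1 (nabla1 g P Y Z)"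
proof -
  assume Y: "C1 Y" and Z: "C2 Z"
  have "C1 (\<lambda>y. lc_nabla g Y Z y + piform g P Z y *\<^sub>R Y y - gm g Y Z y *\<^sub>R P y)"
    by (intro C1_add C1_diff C1_scaleR C1_lc Y Z C1_piform C2_C1[OF Z] C1_gm C1_P)
  then show ?thesis by (simp add: nabla1_def[abs_def])
qed

lemma C1_tors: "C1 Y \<Longrightarrow> C1 Z \<Longrightarrow> C1 (torsion1 g P Y Z)"
proof -
  assume Y: "C1 Y" and Z: "C1 Z"
  have "C1 (\<lambda>y. piform g P Z y *\<^sub>R Y y - piform g P Y y *\<^sub>R Z y)"
    by (intro C1_diff C1_scaleR C1_piform Y Z)
  then show ?thesis by (simp add: torsion1_def[abs_def])
qed

end


context geo
begin

lemma lc_add: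
  assumes x: "x \<in> U" and A: "C1 A" and B: "C1 B"
  shows "lc_nabla g X (\<lambda>y. A y + B y) x = lc_nabla g X A x + lc_nabla g X B x"
  unfolding lc_nabla_def ddir_def fd_add[OF C1D[OF A x] C1D[OF B x]]
  by (simp add: vec_eq_iff algebra_simps sum.distrib)

lemma lc_diff:
  assumes x: "x \<in> U" and A: "C1 A" and B: "C1 B"
  shows "lc_nabla g X (\<lambda>y. A y - B y) x = lc_nabla g X A x - lc_nabla g X B x"
  unfolding lc_nabla_def ddir_def fd_diff[OF C1D[OF A x] C1D[OF B x]]
  by (simp add: vec_eq_iff algebra_simps sum_subtractf)

lemma lc_scale:
  assumes x: "x \<in> U" and f: "C1 f" and V: "C1 V"
  shows "lc_nabla g X (\<lambda>y. f y *\<^sub>R V y) x = frechet_derivative f (at x) (X x) *\<^sub>R V x + f x *\<^sub>R lc_nabla g X V x"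
  unfolding lc_nabla_def ddir_def fd_scaleR[OF C1D[OF f x] C1D[OF V x]]
  by (simp add: vec_eq_iff algebra_simps sum_distrib_left)

lemma lc_transform:
  assumes x: "x \<in> U" and eq: "\<And>y. y \<in> U \<Longrightarrow> V y = W y" and V: "C1 V"
  shows "lc_nabla g X V x = lc_nabla g X W x"
  using fd_transform[OF opn x eq C1D[OF V x]] eq[OF x] unfolding lc_nabla_def ddir_def by simp

lemma lc_pt: "lc_nabla g X V x = lc_nabla g (\<lambda>_. X x) V x"
  by (simp add: lc_nabla_def ddir_def)

lemma mc:
  assumes x: "x \<in> U" and Y: "C1 Y" and Z: "C1 Z"
  shows "ddir (gm g Y Z) X x = gm g (lc_nabla g X Y) Z x + gm g Y (lc_nabla g X Z) x"
proof -
  define v where "v = X x"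
  define G where "G = g x"
  define Dg where "Dg = frechet_derivative g (at x)"
  define DY where "DY = frechet_derivative Y (at x)"
  define DZ where "DZ = frechet_derivative Z (at x)"
  define GY where "GY = (\<chi> k. \<Sum>i\<in>UNIV. \<Sum>j\<in>UNIV. christoffel g x k i j * v$i * Y x$j)"
  define GZ where "GZ = (\<chi> k. \<Sum>i\<in>UNIV. \<Sum>j\<in>UNIV. christoffel g x k i j * v$i * Z x$j)"
  have lcY: "lc_nabla g X Y x = DY v + GY"
    by (simp add: lc_nabla_def ddir_def DY_def GY_def v_def)
  have lcZ: "lc_nabla g X Z x = DZ v + GZ"
    by (simp add: lc_nabla_def ddir_def DZ_def GZ_def v_def)
  have dY: "(\<lambda>y. Y y $ i) differentiable (at x)" for i by (intro diff_nth C1D[OF Y x])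
  have dZ: "(\<lambda>y. Z y $ i) differentiable (at x)" for i by (intro diff_nth C1D[OF Z x])
  have dg1: "(\<lambda>y. g y $ i) differentiable (at x)" for i by (intro diff_nth g_diff x)
  have dg: "(\<lambda>y. g y $ i $ j) differentiable (at x)" for i j by (intro diff_nth dg1)
  have dgZ: "(\<lambda>y. g y $ i $ j * Z y $ j) differentiable (at x)" for i j
    using dg dZ by simp
  have dYgZ: "(\<lambda>y. Y y $ i * (g y $ i $ j * Z y $ j)) differentiable (at x)" for i j
    using dY dgZ by simp
  have dS: "(\<lambda>y. \<Sum>j\<in>UNIV. Y y $ i * (g y $ i $ j * Z y $ j)) differentiable (at x)" for i
    using dYgZ by simp
  have gmeq: "gm g Y Z = (\<lambda>y. \<Sum>i\<in>UNIV. \<Sum>j\<in>UNIV. Y y $ i * (g y $ i $ j * Z y $ j))"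
    by (simp add: fun_eq_iff gm_def gm_sum)
  have L0: "ddir (gm g Y Z) X x = (\<Sum>i\<in>UNIV. \<Sum>j\<in>UNIV.
       Y x $ i * (g x $ i $ j * DZ v $ j + Dg v $ i $ j * Z x $ j) + DY v $ i * (g x $ i $ j * Z x $ j))"
    unfolding gmeq ddir_def v_def[symmetric]
    by (simp add: fd_sum dS dYgZ fd_mult dY dgZ dg dZ fd_nth dg1 g_diff[OF x] C1D[OF Y x] C1D[OF Z x] DY_def DZ_def Dg_def)
  have L: "ddir (gm g Y Z) X x = DY v \<bullet> (G *v Z x) + Y x \<bullet> (G *v DZ v) + Y x \<bullet> (Dg v *v Z x)"
    unfolding L0 gm_sum G_def by (simp add: algebra_simps sum.distrib)
  have C: "GY \<bullet> (G *v Z x) + Y x \<bullet> (G *v GZ) = (\<Sum>i\<in>UNIV. v$i * (Y x \<bullet> (Dg (axis i 1) *v Z x)))"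
    using christ_alg[OF minv(1)[OF g_inv[OF x]] g_sym[OF x] Dg_sym[OF x], of "\<lambda>i. axis i 1" v "Y x" "Z x"]
    unfolding GY_def GZ_def G_def Dg_def christoffel_def by simp
  have lin: "linear Dg" unfolding Dg_def using fd_linear g_diff[OF x] by blast
  have linphi: "linear (\<lambda>M. Y x \<bullet> (M *v Z x))"
    by (rule linearI) (simp_all add: matrix_vector_mult_add_rdistrib inner_add_right scaleR_matrix_vector_assoc[symmetric])
  have Lin: "Y x \<bullet> (Dg v *v Z x) = (\<Sum>i\<in>UNIV. v$i * (Y x \<bullet> (Dg (axis i 1) *v Z x)))"
  proof -
    have "Dg v = (\<Sum>i\<in>UNIV. v$i *\<^sub>R Dg (axis i 1))"
      using vec_basis[of v] real_vector.linear_sum[OF lin] linear_cmul[OF lin] by (metis (no_types, lifting) sum.cong)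
    then have "Y x \<bullet> (Dg v *v Z x) = Y x \<bullet> ((\<Sum>i\<in>UNIV. v$i *\<^sub>R Dg (axis i 1)) *v Z x)" by simp
    also have "\<dots> = (\<Sum>i\<in>UNIV. Y x \<bullet> ((v$i *\<^sub>R Dg (axis i 1)) *v Z x))"
      by (rule real_vector.linear_sum[OF linphi])
    also have "\<dots> = (\<Sum>i\<in>UNIV. v$i * (Y x \<bullet> (Dg (axis i 1) *v Z x)))"
      using linear_cmul[OF linphi] by simp
    finally show ?thesis .
  qed
  show ?thesis
    unfolding L gm_def lcY lcZ
    using C Lin unfolding G_def
    by (simp add: algebra_simps inner_add_left inner_add_right matrix_vector_right_distrib)
qed

end


context geo
begin

lemma gm_sym: "x \<in> U \<Longrightarrow> gm g X Y x = gm g Y X x"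
  unfolding gm_def using sym_dot[OF g_sym] by (simp add: inner_commute)

lemma conc_pt:
  assumes x: "x \<in> U" and Y: "smooth_on U Y"
  shows "cov_piform g P X Y x - piform g P X x * piform g P Y x = \<omega> x * gm g X Y x"
proof -
  have "cov_piform g P (\<lambda>_. X x) Y x - piform g P (\<lambda>_. X x) x * piform g P Y x = \<omega> x * gm g (\<lambda>_. X x) Y x"
    using conc x Y smooth_on_const unfolding concircular_def by blast
  moreover have "cov_piform g P (\<lambda>_. X x) Y x = cov_piform g P X Y x"
    unfolding cov_piform_def ddir_def using lc_pt[of X Y x] by (simp add: piform_def gm_def)
  ultimately show ?thesis by (simp add: piform_def gm_def)
qed

lemma smooth_coord: "smooth_on U (coord_vf i)"
  unfolding coord_vf_def by (rule smooth_on_const)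

lemma C1_coord: "C1 (coord_vf i)" using smooth_C1[OF smooth_coord] .

lemma nablaP_om:
  assumes x: "x \<in> U"
  shows "lc_nabla g X P x = \<omega> x *\<^sub>R X x + piform g P X x *\<^sub>R P x"
proof -
  define w where "w = lc_nabla g X P x - \<omega> x *\<^sub>R X x - piform g P X x *\<^sub>R P x"
  have comp: "(g x *v w) $ j = 0" for j
  proof -
    have c: "cov_piform g P X (coord_vf j) x - piform g P X x * piform g P (coord_vf j) x = \<omega> x * gm g X (coord_vf j) x"
      by (rule conc_pt[OF x smooth_coord])
    have "ddir (piform g P (coord_vf j)) X x = gm g (lc_nabla g X (coord_vf j)) P x + gm g (coord_vf j) (lc_nabla g X P) x"
      unfolding piform_def[abs_def] using mc[OF x C1_coord C1_P] by simp
    then have cv: "cov_piform g P X (coord_vf j) x = gm g (coord_vf j) (lc_nabla g X P) x"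
      unfolding cov_piform_def by (simp add: piform_def)
    have "gm g X (coord_vf j) x = gm g (coord_vf j) X x" by (rule gm_sym[OF x])
    with c cv have "gm g (coord_vf j) (lc_nabla g X P) x - piform g P X x * gm g (coord_vf j) P x - \<omega> x * gm g (coord_vf j) X x = 0"
      by (simp add: piform_def)
    then have "axis j 1 \<bullet> (g x *v w) = 0"
      unfolding w_def gm_def coord_vf_def
      by (simp add: matrix_vector_mult_diff_distrib matrix_vector_mult_scaleR inner_diff_right)
    then show ?thesis by (simp add: inner_axis')
  qed
  then have "g x *v w = 0" by (simp add: vec_eq_iff)
  then have "matrix_inv (g x) *v (g x *v w) = 0" by simp
  then have "w = 0" by (simp add: matrix_vector_mul_assoc minv(2)[OF g_inv[OF x]])
  then show ?thesis unfolding w_def by (simp add: algebra_simps)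
qed

lemma om1:
  assumes x: "x \<in> U"
  shows "\<omega> x = 1"
proof -
  have "ddir (gm g P P) P x = ddir (\<lambda>_. -1::real) P x"
    unfolding ddir_def using fd_transform[OF opn x, of "gm g P P" "\<lambda>_. -1"] PP C1D[OF C1_gm[OF C1_P C1_P] x] by simp
  then have "ddir (gm g P P) P x = 0" by (simp add: ddir_def)
  then have "gm g (lc_nabla g P P) P x + gm g P (lc_nabla g P P) x = 0" using mc[OF x C1_P C1_P] by simp
  then have "2 * gm g (lc_nabla g P P) P x = 0" using gm_sym[OF x, of P "lc_nabla g P P"] by simp
  moreover have "lc_nabla g P P x = (\<omega> x - 1) *\<^sub>R P x"
    using nablaP_om[OF x, of P] PP x by (simp add: piform_def algebra_simps)
  ultimately have "(\<omega> x - 1) * gm g P P x = 0"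
    by (simp add: gm_def inner_scaleR_left)
  then show ?thesis using PP x by simp
qed

lemma nablaP:
  assumes x: "x \<in> U"
  shows "lc_nabla g X P x = X x + piform g P X x *\<^sub>R P x"
  using nablaP_om[OF x] om1[OF x] by simp

lemma dpi:
  assumes x: "x \<in> U" and Y: "smooth_on U Y"
  shows "ddir (piform g P Y) X x = piform g P X x * piform g P Y x + gm g X Y x + piform g P (lc_nabla g X Y) x"
  using conc_pt[OF x Y, of X] om1[OF x] unfolding cov_piform_def by simp

lemma fd_pi: 
  assumes x: "x \<in> U" and Y: "smooth_on U Y"
  shows "frechet_derivative (piform g P Y) (at x) v = piform g P (\<lambda>_. v) x * piform g P Y x + gm g (\<lambda>_. v) Y x + piform g P (lc_nabla g (\<lambda>_. v) Y) x"
  using dpi[OF x Y, of "\<lambda>_. v"] by (simp add: ddir_def)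

lemma fd_gm:
  assumes x: "x \<in> U" and Y: "C1 Y" and Z: "C1 Z"
  shows "frechet_derivative (gm g Y Z) (at x) v = gm g (lc_nabla g (\<lambda>_. v) Y) Z x + gm g Y (lc_nabla g (\<lambda>_. v) Z) x"
  using mc[OF x Y Z, of "\<lambda>_. v"] by (simp add: ddir_def)

end


context geo
begin

lemma christ_sym:
  assumes x: "x \<in> U"
  shows "christoffel g x k i j = christoffel g x k j i"
  unfolding christoffel_def using Dg_ent[OF x] by (simp add: algebra_simps)

lemma tfree:
  assumes x: "x \<in> U"
  shows "lie_bracket X Y x = lc_nabla g X Y x - lc_nabla g Y X x"
proof -
  have "(\<Sum>i\<in>UNIV. \<Sum>j\<in>UNIV. christoffel g x k i j * X x $ i * Y x $ j)
      = (\<Sum>i\<in>UNIV. \<Sum>j\<in>UNIV. christoffel g x k i j * Y x $ i * X x $ j)" for k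
  proof -
    have "(\<Sum>i\<in>UNIV. \<Sum>j\<in>UNIV. christoffel g x k i j * X x $ i * Y x $ j)
        = (\<Sum>j\<in>UNIV. \<Sum>i\<in>UNIV. christoffel g x k i j * X x $ i * Y x $ j)"
      by (rule sum.swap)
    also have "\<dots> = (\<Sum>j\<in>UNIV. \<Sum>i\<in>UNIV. christoffel g x k j i * Y x $ j * X x $ i)"
      using christ_sym[OF x] by (simp add: mult_ac)
    finally show ?thesis .
  qed
  then show ?thesis
    unfolding lie_bracket_def lc_nabla_def by (simp add: vec_eq_iff)
qed

lemma lc_scale':
  assumes x: "x \<in> U" and f: "C1 f" and V: "C1 V"
  shows "lc_nabla g X (\<lambda>y. f y *\<^sub>R V y) x = ddir f X x *\<^sub>R V x + f x *\<^sub>R lc_nabla g X V x"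
  using lc_scale[OF x f V] by (simp add: ddir_def)

lemma lcN:
  assumes x: "x \<in> U" and Y: "smooth_on U Y" and Z: "smooth_on U Z"
  shows "lc_nabla g X (nabla1 g P Y Z) x = lc_nabla g X (lc_nabla g Y Z) x
     + (ddir (piform g P Z) X x *\<^sub>R Y x + piform g P Z x *\<^sub>R lc_nabla g X Y x)
     - (ddir (gm g Y Z) X x *\<^sub>R P x + gm g Y Z x *\<^sub>R lc_nabla g X P x)"
proof -
  have Y1: "C1 Y" and Z1: "C1 Z" and Z2: "C2 Z" using smooth_C1 smooth_C2 Y Z by auto
  have eq: "nabla1 g P Y Z = (\<lambda>y. (lc_nabla g Y Z y + piform g P Z y *\<^sub>R Y y) - gm g Y Z y *\<^sub>R P y)"
    by (simp add: fun_eq_iff nabla1_def)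
  have c1: "C1 (lc_nabla g Y Z)" by (rule C1_lc[OF Y1 Z2])
  have c2: "C1 (\<lambda>y. piform g P Z y *\<^sub>R Y y)" by (intro C1_scaleR C1_piform Z1 Y1)
  have c3: "C1 (\<lambda>y. gm g Y Z y *\<^sub>R P y)" by (intro C1_scaleR C1_gm Z1 Y1 C1_P)
  show ?thesis
    unfolding eq
    by (simp add: lc_diff[OF x C1_add[OF c1 c2] c3] lc_add[OF x c1 c2]
        lc_scale'[OF x C1_piform[OF Z1] Y1] lc_scale'[OF x C1_gm[OF Y1 Z1] C1_P])
qed

lemma lcT:
  assumes x: "x \<in> U" and Y: "smooth_on U Y" and Z: "smooth_on U Z"
  shows "lc_nabla g X (torsion1 g P Y Z) x =
       (ddir (piform g P Z) X x *\<^sub>R Y x + piform g P Z x *\<^sub>R lc_nabla g X Y x)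
     - (ddir (piform g P Y) X x *\<^sub>R Z x + piform g P Y x *\<^sub>R lc_nabla g X Z x)"
proof -
  have Y1: "C1 Y" and Z1: "C1 Z" using smooth_C1 Y Z by auto
  have eq: "torsion1 g P Y Z = (\<lambda>y. piform g P Z y *\<^sub>R Y y - piform g P Y y *\<^sub>R Z y)"
    by (simp add: fun_eq_iff torsion1_def)
  have c2: "C1 (\<lambda>y. piform g P Z y *\<^sub>R Y y)" by (intro C1_scaleR C1_piform Z1 Y1)
  have c3: "C1 (\<lambda>y. piform g P Y y *\<^sub>R Z y)" by (intro C1_scaleR C1_piform Z1 Y1)
  show ?thesis
    unfolding eq
    by (simp add: lc_diff[OF x c2 c3]
        lc_scale'[OF x C1_piform[OF Z1] Y1] lc_scale'[OF x C1_piform[OF Y1] Z1])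
qed

end


context geo
begin

lemma curv0_pt:
  assumes x: "x \<in> U" and X: "smooth_on U X" and Y: "smooth_on U Y" and Z: "smooth_on U Z"
  shows "curv0 g P X Y Z x = curv (lc_nabla g) X Y Z x + gm g X Z x *\<^sub>R Y x - gm g Y Z x *\<^sub>R X x
     - (1/4 * piform g P Z x) *\<^sub>R (piform g P Y x *\<^sub>R X x - piform g P X x *\<^sub>R Y x)"
proof -
  have X1: "C1 X" and Y1: "C1 Y" and Z1: "C1 Z" using smooth_C1 X Y Z by auto
  define G where "G = g x"
  have symG: "\<And>u w. u \<bullet> (G *v w) = w \<bullet> (G *v u)"
    unfolding G_def using sym_dot[OF g_sym[OF x]] by (simp add: inner_commute)
  have pp: "P x \<bullet> (G *v P x) = -1" using PP x by (simp add: gm_def G_def)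
  show ?thesis
    unfolding curv0_def Let_def curv_def cov_torsion_def
    apply (simp only: nabla1_def torsion1_def lcN[OF x Y Z] lcN[OF x X Z] lcT[OF x Y Z] lcT[OF x X Z]
        dpi[OF x X] dpi[OF x Y] dpi[OF x Z] mc[OF x Y1 Z1] mc[OF x X1 Z1] nablaP[OF x] tfree[OF x])
    apply (simp only: piform_def gm_def G_def[symmetric] nabla1_def torsion1_def tfree[OF x] nablaP[OF x])
    apply (simp add: inner_add_left inner_add_right inner_diff_left inner_diff_right matrix_vector_right_distrib matrix_vector_mult_diff_distrib matrix_vector_mult_scaleR pp)
    apply (simp add: symG)
    apply (simp add: vec_eq_iff algebra_simps)
    done
qed


lemma lc_zero: "lc_nabla g X (\<lambda>_. 0) x = 0"
  by (simp add: lc_nabla_def ddir_def vec_eq_iff)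

lemma curvPP:
  assumes x: "x \<in> U" and X: "smooth_on U X"
  shows "curv (lc_nabla g) X P P x = - X x - piform g P X x *\<^sub>R P x"
proof -
  have X1: "C1 X" using smooth_C1 X by auto
  have P2: "C2 P" using smooth_C2 Psm by auto
  define G where "G = g x"
  have symG: "\<And>u w. u \<bullet> (G *v w) = w \<bullet> (G *v u)"
    unfolding G_def using sym_dot[OF g_sym[OF x]] by (simp add: inner_commute)
  have pp: "P x \<bullet> (G *v P x) = -1" using PP x by (simp add: gm_def G_def)
  have lPP: "lc_nabla g P P y = 0" if "y \<in> U" for y
    using nablaP[OF that, of P] PP that by (simp add: piform_def)
  have 1: "lc_nabla g X (lc_nabla g P P) x = 0"
    using lc_transform[OF x lPP C1_lc[OF C1_P P2], of X] lc_zero by simp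
  have c2: "C1 (\<lambda>y. piform g P X y *\<^sub>R P y)" by (intro C1_scaleR C1_piform X1 C1_P)
  have 2: "lc_nabla g P (lc_nabla g X P) x = lc_nabla g P X x + (ddir (piform g P X) P x *\<^sub>R P x + piform g P X x *\<^sub>R lc_nabla g P P x)"
  proof -
    have "lc_nabla g P (lc_nabla g X P) x = lc_nabla g P (\<lambda>y. X y + piform g P X y *\<^sub>R P y) x"
      by (rule lc_transform[OF x _ C1_lc[OF X1 P2]]) (simp add: nablaP)
    also have "\<dots> = lc_nabla g P X x + (ddir (piform g P X) P x *\<^sub>R P x + piform g P X x *\<^sub>R lc_nabla g P P x)"
      by (simp add: lc_add[OF x X1 c2] lc_scale'[OF x C1_piform[OF X1] C1_P])
    finally show ?thesis .
  qed
  show ?thesis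
    unfolding curv_def 1 2
    apply (simp only: lPP[OF x] dpi[OF x X] nablaP[OF x] tfree[OF x])
    apply (simp only: piform_def gm_def G_def[symmetric] tfree[OF x] nablaP[OF x])
    apply (simp add: inner_add_left inner_add_right inner_diff_left inner_diff_right matrix_vector_right_distrib matrix_vector_mult_diff_distrib matrix_vector_mult_scaleR pp)
    apply (simp add: symG)
    done
qed

end


context geo
begin

lemma gm_coord: "gm g (coord_vf i) Z x = (g x *v Z x) $ i"
  by (simp add: gm_def coord_vf_def inner_axis')

lemma pi_coord: "piform g P (coord_vf i) x = (g x *v P x) $ i"
  by (simp add: piform_def gm_coord)

lemma cvi: "coord_vf i x $ i = 1" by (simp add: coord_vf_def)

lemma s_gm: "(\<Sum>i\<in>UNIV. gm g (coord_vf i) Z x * Y x $ i) = gm g Y Z x"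
  unfolding gm_coord by (simp add: gm_def inner_vec_def mult.commute)

lemma s_pi: "(\<Sum>i\<in>UNIV. piform g P (coord_vf i) x * Y x $ i) = piform g P Y x"
  by (simp add: piform_def s_gm)

lemma s_cv: "(\<Sum>i\<in>(UNIV::'n set). coord_vf i x $ i) = real CARD('n)"
  by (simp add: cvi)

lemma sum_dot: "(\<Sum>i\<in>UNIV. (u::real^'n) $ i * w $ i) = w \<bullet> u"
  by (simp add: inner_vec_def mult.commute)

lemma ricci0_eq:
  assumes x: "x \<in> U" and Y: "smooth_on U Y" and Z: "smooth_on U Z"
  shows "ricci0 g P Y Z x = ricci_g g Y Z x - (real CARD('n) - 1) * gm g Y Z x
     - (real CARD('n) - 1) / 4 * (piform g P Y x * piform g P Z x)"
proof -
  have "ricci0 g P Y Z x = (\<Sum>i\<in>UNIV. curv (lc_nabla g) (coord_vf i) Y Z x $ i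
      + gm g (coord_vf i) Z x * Y x $ i - gm g Y Z x * coord_vf i x $ i
      - (1/4 * piform g P Z x) * (piform g P Y x * coord_vf i x $ i - piform g P (coord_vf i) x * Y x $ i))"
    unfolding ricci0_def ricci_def by (rule sum.cong) (simp_all add: curv0_pt[OF x smooth_coord Y Z])
  also have "\<dots> = ricci_g g Y Z x + gm g Y Z x - gm g Y Z x * real CARD('n)
      - (1/4 * piform g P Z x) * (piform g P Y x * real CARD('n) - piform g P Y x)"
  proof -
    have "(\<Sum>i\<in>UNIV. curv (lc_nabla g) (coord_vf i) Y Z x $ i
      + gm g (coord_vf i) Z x * Y x $ i - gm g Y Z x * coord_vf i x $ i
      - (1/4 * piform g P Z x) * (piform g P Y x * coord_vf i x $ i - piform g P (coord_vf i) x * Y x $ i))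
      = (\<Sum>i\<in>UNIV. curv (lc_nabla g) (coord_vf i) Y Z x $ i)
      + (\<Sum>i\<in>UNIV. gm g (coord_vf i) Z x * Y x $ i) - gm g Y Z x * (\<Sum>i\<in>UNIV. coord_vf i x $ i)
      - (1/4 * piform g P Z x) * (piform g P Y x * (\<Sum>i\<in>UNIV. coord_vf i x $ i) - (\<Sum>i\<in>UNIV. piform g P (coord_vf i) x * Y x $ i))"
      by (simp add: sum.distrib sum_subtractf sum_distrib_left right_diff_distrib)
    then show ?thesis unfolding s_gm s_pi s_cv ricci_g_def ricci_def .
  qed
  finally show ?thesis by (simp add: field_simps)
qed

lemma ricciPP:
  assumes x: "x \<in> U"
  shows "ricci_g g P P x = - (real CARD('n) - 1)"
proof -
  have "ricci_g g P P x = (\<Sum>i\<in>UNIV. - coord_vf i x $ i - piform g P (coord_vf i) x * P x $ i)"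
    unfolding ricci_g_def ricci_def by (rule sum.cong) (simp_all add: curvPP[OF x smooth_coord])
  also have "\<dots> = - real CARD('n) - gm g P P x"
    by (simp add: sum_subtractf s_pi s_cv sum_negf) (simp add: piform_def)
  finally show ?thesis using PP x by simp
qed

lemma scal_form:
  assumes x: "x \<in> U"
    and F: "\<And>i j. F (coord_vf i) (coord_vf j) x = a * gm g (coord_vf i) (coord_vf j) x
       + b * (piform g P (coord_vf i) x * piform g P (coord_vf j) x)"
  shows "scal g F x = a * real CARD('n) - b"
proof -
  define G where "G = g x"
  define Gi where "Gi = matrix_inv G"
  have GiG: "Gi ** G = mat 1" unfolding Gi_def G_def by (rule minv(2)[OF g_inv[OF x]])
  have gc: "gm g (coord_vf i) (coord_vf j) x = G $ i $ j" for i j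
    unfolding gm_coord G_def by (simp add: coord_vf_def mv_axis)
  have T1: "(\<Sum>i\<in>UNIV. \<Sum>j\<in>UNIV. Gi $ i $ j * G $ i $ j) = real CARD('n)"
  proof -
    have "(\<Sum>j\<in>UNIV. Gi $ i $ j * G $ i $ j) = (Gi ** G) $ i $ i" for i
      using g_ent[OF x] unfolding G_def by (simp add: matrix_matrix_mult_def)
    then show ?thesis by (simp add: GiG mat_def)
  qed
  have T2: "(\<Sum>i\<in>UNIV. \<Sum>j\<in>UNIV. Gi $ i $ j * ((G *v P x) $ i * (G *v P x) $ j)) = -1"
  proof -
    have "(\<Sum>i\<in>UNIV. \<Sum>j\<in>UNIV. Gi $ i $ j * ((G *v P x) $ i * (G *v P x) $ j))
        = (G *v P x) \<bullet> (Gi *v (G *v P x))"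
      by (simp add: gm_sum mult_ac)
    also have "\<dots> = (G *v P x) \<bullet> P x" by (simp add: matrix_vector_mul_assoc GiG)
    also have "\<dots> = P x \<bullet> (G *v P x)" by (simp add: inner_commute)
    also have "\<dots> = -1" using PP x by (simp add: gm_def G_def)
    finally show ?thesis .
  qed
  have "scal g F x = (\<Sum>i\<in>UNIV. \<Sum>j\<in>UNIV. a * (Gi $ i $ j * G $ i $ j) + b * (Gi $ i $ j * ((G *v P x) $ i * (G *v P x) $ j)))"
    unfolding scal_def F gc pi_coord G_def[symmetric] Gi_def[symmetric] by (simp add: algebra_simps)
  also have "\<dots> = a * real CARD('n) - b"
    by (simp add: sum.distrib sum_distrib_left[symmetric] T1 T2)
  finally show ?thesis .
qed

end

theorem mainTheorem12:
  fixes U :: "(real^'n) set" and g :: "real^'n \<Rightarrow> real^'n^'n"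
    and P :: "'n vfield" and \<omega> :: "real^'n \<Rightarrow> real"
  assumes "open U"
    and "CARD('n) \<ge> 3"
    and "lorentzian_metric U g"
    and "smooth_on U P"
    and "concircular U g P \<omega>"
    and "\<forall>x\<in>U. gm g P P x = -1"
  shows "(einstein_zeroth U g P \<longleftrightarrow>
           (perfect_fluid U g P \<and>
            (\<forall>Y Z. smooth_on U Y \<longrightarrow> smooth_on U Z \<longrightarrow>
               (\<forall>x\<in>U. ricci_g g Y Z x =
                  (real CARD('n) - 1) / 4 * (5 * gm g Y Z x + piform g P Y x * piform g P Z x)))))
       \<and> (einstein_zeroth U g P \<longrightarrow>
           (\<forall>x\<in>U. 4 * scal g (ricci_g g) x = (real CARD('n) - 1) * (5 * real CARD('n) - 1)))"
proof -
  interpret geo U g P \<omega>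
    by unfold_locales (use assms in auto)
  define n where "n = real CARD('n)"
  have n0: "n \<noteq> 0" unfolding n_def by simp
  have PPx: "\<And>x. x \<in> U \<Longrightarrow> gm g P P x = -1" using assms(6) by blast
  have RIC: "\<forall>Y Z. smooth_on U Y \<longrightarrow> smooth_on U Z \<longrightarrow>
               (\<forall>x\<in>U. ricci_g g Y Z x = (n - 1) / 4 * (5 * gm g Y Z x + piform g P Y x * piform g P Z x))"
    if E: "einstein_zeroth U g P"
  proof (intro allI impI ballI)
    fix Y Z :: "'n vfield" and x assume Y: "smooth_on U Y" and Z: "smooth_on U Z" and x: "x \<in> U"
    define l where "l = scal g (ricci0 g P) x / n"
    have gen: "ricci_g g Y' Z' x = (l + (n - 1)) * gm g Y' Z' x + (n - 1) / 4 * (piform g P Y' x * piform g P Z' x)"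
      if "smooth_on U Y'" "smooth_on U Z'" for Y' Z' :: "'n vfield"
      using ricci0_eq[OF x that] E that x unfolding einstein_zeroth_def l_def n_def
      by (simp add: algebra_simps)
    have "- (n - 1) = (l + (n - 1)) * (-1) + (n - 1) / 4 * ((-1) * (-1))"
      using gen[OF Psm Psm] ricciPP[OF x] PPx[OF x] unfolding n_def piform_def by simp
    then have l: "l = (n - 1) / 4" by (simp add: field_simps)
    have eq: "ricci_g g Y Z x = ((n - 1) / 4 + (n - 1)) * gm g Y Z x + (n - 1) / 4 * (piform g P Y x * piform g P Z x)"
      using gen[OF Y Z] unfolding l .
    show "ricci_g g Y Z x = (n - 1) / 4 * (5 * gm g Y Z x + piform g P Y x * piform g P Z x)"
      unfolding eq by (simp add: field_simps)
  qed
  have conv: "einstein_zeroth U g P"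
    if R: "\<forall>Y Z. smooth_on U Y \<longrightarrow> smooth_on U Z \<longrightarrow>
               (\<forall>x\<in>U. ricci_g g Y Z x = (n - 1) / 4 * (5 * gm g Y Z x + piform g P Y x * piform g P Z x))"
  proof -
    have r0: "ricci0 g P Y Z x = (n - 1) / 4 * gm g Y Z x"
      if "smooth_on U Y" "smooth_on U Z" "x \<in> U" for Y Z :: "'n vfield" and x
      using ricci0_eq[OF that(3,1,2)] R that unfolding n_def by (simp add: field_simps)
    have sc: "scal g (ricci0 g P) x = (n - 1) / 4 * n" if x: "x \<in> U" for x
      using scal_form[OF x, of "ricci0 g P" "(n - 1) / 4" 0] r0[OF smooth_coord smooth_coord x] unfolding n_def
      by simp
    show ?thesis unfolding einstein_zeroth_def
    proof (intro allI impI ballI)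
      fix Y Z :: "'n vfield" and x assume Y: "smooth_on U Y" and Z: "smooth_on U Z" and x: "x \<in> U"
      have q: "scal g (ricci0 g P) x / real CARD('n) = (n - 1) / 4"
        unfolding sc[OF x] n_def[symmetric] using n0 by simp
      show "ricci0 g P Y Z x = scal g (ricci0 g P) x / real CARD('n) * gm g Y Z x"
        unfolding q r0[OF Y Z x] ..
    qed
  qed
  have scal_val: "4 * scal g (ricci_g g) x = (n - 1) * (5 * n - 1)"
    if R: "\<forall>Y Z. smooth_on U Y \<longrightarrow> smooth_on U Z \<longrightarrow>
               (\<forall>x\<in>U. ricci_g g Y Z x = (n - 1) / 4 * (5 * gm g Y Z x + piform g P Y x * piform g P Z x))"
      and x: "x \<in> U" for x
  proof -
    have "scal g (ricci_g g) x = 5 * (n - 1) / 4 * n - (n - 1) / 4"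
      using scal_form[OF x, of "ricci_g g" "5 * (n - 1) / 4" "(n - 1) / 4"] R smooth_coord x unfolding n_def
      by (simp add: algebra_simps)
    then show ?thesis by (simp add: field_simps)
  qed
  have pf: "perfect_fluid U g P"
    if R: "\<forall>Y Z. smooth_on U Y \<longrightarrow> smooth_on U Z \<longrightarrow>
               (\<forall>x\<in>U. ricci_g g Y Z x = (n - 1) / 4 * (5 * gm g Y Z x + piform g P Y x * piform g P Z x))"
    unfolding perfect_fluid_def
    by (rule exI[of _ "\<lambda>_. 5 * (n - 1) / 4"], rule exI[of _ "\<lambda>_. (n - 1) / 4"]) (use R in \<open>simp add: algebra_simps\<close>)
  show ?thesis
    using RIC conv scal_val pf unfolding n_def by blast
qed


end
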